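(* Let $n\ge 1$ and let $\Phi_n\sim DPP(K_n)$ be a stationary determinantal point process on $\mathbb{R}^n$, where $K_n\in L^2(\mathbb{R}^n)$ is a continuous, symmetric ($K_n(x)=K_n(-x)$), real-valued function with $K_n(0)>0$, and assume its Fourier transform satisfies $0\le \hat K_n<1$. Let $\eta_n$ be a point process such that $\Phi_n=\Phi_n^{0,!}\cup\eta_n$ in distribution and $\Phi_n^{0,!}\cap\eta_n=\emptyset$. Let $X_n$ be a random vector in $\mathbb{R}^n$ with probability density $x\mapsto K_n(x)^2/\|K_n\|_2^2$. Then for every Borel set $B\subseteq\mathbb{R}^n$, \[\mathbb{P}(X_n\in B)=\frac{\mathbb{E}[\eta_n(B)]}{\mathbb{E}[\eta_n(\mathbb{R}^n)]}.\]
   Context: A simple locally finite point process $\Phi$ on $\mathbb{R}^n$ is a determinantal point process with kernel $K$ ($\Phi\sim DPP(K)$) if for every $k\ge1$ its $k$-th joint intensity (correlation function) exists and equals $\rho^{(k)}(x_1,\dots,x_k)=\det(K(x_i,x_j))_{1\le i,j\le k}$. "Stationary with kernel $K_n$" means the two-point kernel is $K(x,y)=K_n(x-y)$; the intensity is then $K_n(0)$. The Fourier transform is $\hat f(\xi)=\int f(x)e^{-2\pi i x\cdot \xi}\,dx$; the condition $0\le\hat K_n\le 1$ is equivalent to existence of the DPP. $\Phi_n^{0,!}$ denotes a point process having the reduced Palm distribution of $\Phi_n$ (the distribution of $\Phi_n$ conditioned to have a point at the origin, with that point removed). Under the hypotheses (in particular $\hat K_n<1$), a point process $\eta_n$ with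 $\Phi_n=\Phi_n^{0,!}\cup\eta_n$ in distribution and $\Phi_n^{0,!}\cap\eta_n=\emptyset$ exists (Goldman). $\|\cdot\|_2$ is the $L^2(\mathbb{R}^n)$ norm. *)

theory Defs
  imports "HOL-Probability.Probability"
begin

definition locally_finite_set :: "'a::euclidean_space set \<Rightarrow> bool" where
  "locally_finite_set S \<longleftrightarrow> (\<forall>B. bounded B \<longrightarrow> finite (S \<inter> B))"

definition pcount :: "'a set \<Rightarrow> 'a set \<Rightarrow> ennreal" where
  "pcount S B = (if finite (S \<inter> B) then of_nat (card (S \<inter> B)) else \<infinity>)"

definition configs :: "'a::euclidean_space set measure" where
  "configs = sigma {S. locally_finite_set S}
     {{S. locally_finite_set S \<and> card (S \<inter> B) = k} | B k. B \<in> sets borel \<and> bounded B}"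

definition distinct_tuples :: "nat \<Rightarrow> 'a set \<Rightarrow> (nat \<Rightarrow> 'a) set" where
  "distinct_tuples k S = {x \<in> PiE {..<k} (\<lambda>_. S). inj_on x {..<k}}"

definition kdet :: "('a \<Rightarrow> 'a \<Rightarrow> real) \<Rightarrow> nat \<Rightarrow> (nat \<Rightarrow> 'a) \<Rightarrow> real" where
  "kdet K k x = (\<Sum>\<sigma> | \<sigma> permutes {..<k}. of_int (sign \<sigma>) * (\<Prod>i<k. K (x i) (x (\<sigma> i))))"

definition dpp :: "'a::euclidean_space set measure \<Rightarrow> ('a \<Rightarrow> 'a \<Rightarrow> real) \<Rightarrow> bool" where
  "dpp P K \<longleftrightarrow> prob_space P \<and> sets P = sets configs \<and>
     (\<forall>k\<ge>1. (AE x in PiM {..<k} (\<lambda>_. lborel). kdet K k x \<ge> 0) \<and>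
        (\<forall>f \<in> borel_measurable (PiM {..<k} (\<lambda>_. lborel)).
           (\<integral>\<^sup>+ S. (\<integral>\<^sup>+ x. f x \<partial>count_space (distinct_tuples k S)) \<partial>P)
           = (\<integral>\<^sup>+ x. f x * ennreal (kdet K k x) \<partial>PiM {..<k} (\<lambda>_. lborel))))"

text \<open>Q is the reduced Palm distribution (at the origin) of the stationary point
  process with law P, defined by the Campbell--Mecke formula for stationary processes.\<close>
definition reduced_palm :: "'a::euclidean_space set measure \<Rightarrow> 'a set measure \<Rightarrow> bool" where
  "reduced_palm P Q \<longleftrightarrow> prob_space Q \<and> sets Q = sets configs \<and>
     (\<forall>h \<in> borel_measurable configs. \<forall>B \<in> sets borel. bounded B \<longrightarrow>
        (\<integral>\<^sup>+ S. (\<integral>\<^sup>+ x. indicator B x * h ((\<lambda>y. y - x) ` (S - {x})) \<partial>count_space S) \<partial>P)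
        = (\<integral>\<^sup>+ S. pcount S B \<partial>P) * (\<integral>\<^sup>+ S. h S \<partial>Q))"

definition fourier :: "('a::euclidean_space \<Rightarrow> complex) \<Rightarrow> 'a \<Rightarrow> complex" where
  "fourier f \<xi> = (\<integral>x. f x * cis (- 2 * pi * (x \<bullet> \<xi>)) \<partial>lborel)"

text \<open>g is the (L^2, Plancherel) Fourier transform of the L^2 function K,
  characterised by duality against L^1 \<inter> L^2 test functions.\<close>
definition L2_fourier :: "('a::euclidean_space \<Rightarrow> real) \<Rightarrow> ('a \<Rightarrow> real) \<Rightarrow> bool" where
  "L2_fourier K g \<longleftrightarrow> g \<in> borel_measurable lborel \<and> integrable lborel (\<lambda>x. (g x)\<^sup>2) \<and>
     (\<forall>\<phi> :: 'a \<Rightarrow> complex. integrable lborel \<phi> \<and> integrable lborel (\<lambda>x. (cmod (\<phi> x))\<^sup>2) \<longrightarrow>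
        (\<integral>\<xi>. complex_of_real (g \<xi>) * \<phi> \<xi> \<partial>lborel) = (\<integral>x. complex_of_real (K x) * fourier \<phi> x \<partial>lborel))"

end

theory Submission
  imports Defs
begin

lemma lf_finite: "locally_finite_set S \<Longrightarrow> bounded B \<Longrightarrow> finite (S \<inter> B)"
  by (simp add: locally_finite_set_def)

lemma lf_Un: "locally_finite_set S \<Longrightarrow> locally_finite_set T \<Longrightarrow> locally_finite_set (S \<union> T)"
  by (auto simp: locally_finite_set_def Int_Un_distrib2)

lemma lf_countable: "locally_finite_set S \<Longrightarrow> countable S"
proof -
  assume lf: "locally_finite_set S"
  have "S = (\<Union>n::nat. S \<inter> cball 0 (real n))"
    by (auto simp: real_arch_simple)
  moreover have "countable (\<Union>n::nat. S \<inter> cball 0 (real n))"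
    using lf by (intro countable_UN[OF countableI_type] countable_finite) (simp add: locally_finite_set_def)
  ultimately show ?thesis by simp
qed

lemma gen_subset: "{{S. locally_finite_set S \<and> card (S \<inter> B) = k} | B k. B \<in> sets borel \<and> bounded B}
   \<subseteq> Pow {S::'a::euclidean_space set. locally_finite_set S}"
  by auto

lemma space_configs: "space configs = {S. locally_finite_set S}"
  unfolding configs_def by (simp add: space_measure_of_conv)

lemma sets_configs: "sets configs = sigma_sets {S. locally_finite_set S}
   {{S. locally_finite_set S \<and> card (S \<inter> B) = k} | B k. B \<in> sets borel \<and> bounded B}"
  unfolding configs_def using gen_subset[where 'a='a] by (simp only: sets_measure_of_conv if_True)

lemma pcount_emeasure: "pcount S X = emeasure (count_space UNIV) (S \<inter> X)"
  by (simp add: pcount_def emeasure_count_space)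

lemma pcount_bounded_meas:
  assumes B: "B \<in> sets borel" "bounded B"
  shows "(\<lambda>S. pcount S B) \<in> borel_measurable (configs :: 'a::euclidean_space set measure)"
proof -
  have m: "(\<lambda>S. card (S \<inter> B)) \<in> measurable configs (count_space UNIV)"
    unfolding measurable_count_space_eq2_countable
  proof safe
    fix k :: nat
    have "(\<lambda>S. card (S \<inter> B)) -` {k} \<inter> space configs = {S. locally_finite_set S \<and> card (S \<inter> B) = k}"
      by (auto simp: space_configs)
    also have "\<dots> \<in> sets configs"
      unfolding sets_configs using B by (intro sigma_sets.Basic) blast
    finally show "(\<lambda>S. card (S \<inter> B)) -` {k} \<inter> space configs \<in> sets configs" .
  qed simp
  have "(\<lambda>S. of_nat (card (S \<inter> B)) :: ennreal) \<in> borel_measurable configs"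
    by (rule measurable_compose[OF m]) simp
  then show ?thesis
    by (rule measurable_cong[THEN iffD1, rotated])
       (auto simp: space_configs pcount_def lf_finite B)
qed

lemma pcount_SUP: "pcount S B = (SUP n::nat. pcount S (B \<inter> ball 0 (real n)))"
proof -
  have "(SUP n::nat. emeasure (count_space UNIV) (S \<inter> (B \<inter> ball 0 (real n))))
     = emeasure (count_space UNIV) (\<Union>n. S \<inter> (B \<inter> ball 0 (real n)))"
    by (rule SUP_emeasure_incseq) (auto simp: incseq_def)
  moreover have "(\<Union>n. S \<inter> (B \<inter> ball 0 (real n))) = S \<inter> B"
    by (auto intro: reals_Archimedean2)
  ultimately show ?thesis by (simp add: pcount_emeasure)
qed

lemma pcount_meas:
  assumes B: "B \<in> sets borel"
  shows "(\<lambda>S. pcount S B) \<in> borel_measurable (configs :: 'a::euclidean_space set measure)"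
proof -
  have "(\<lambda>S. SUP n::nat. pcount S (B \<inter> ball 0 (real n))) \<in> borel_measurable configs"
    using B by (intro borel_measurable_SUP pcount_bounded_meas) auto
  then show ?thesis by (simp add: pcount_SUP[symmetric])
qed

lemma pcount_Un_disj: "S \<inter> T = {} \<Longrightarrow> pcount (S \<union> T) B = pcount S B + pcount T B"
  unfolding pcount_emeasure Int_Un_distrib2 by (subst plus_emeasure) auto

lemma dt1_bij: "bij_betw (\<lambda>x. restrict (\<lambda>_. x) {..<1::nat}) S (distinct_tuples 1 S)"
proof (rule bij_betwI')
  fix x y assume "x \<in> S" "y \<in> S"
  show "(restrict (\<lambda>_. x) {..<1::nat} = restrict (\<lambda>_. y) {..<1}) = (x = y)"
    by (metis lessThan_iff restrict_apply' zero_less_one)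
next
  fix x assume "x \<in> S" then show "restrict (\<lambda>_. x) {..<1::nat} \<in> distinct_tuples 1 S"
    by (auto simp: distinct_tuples_def lessThan_Suc)
next
  fix t assume t: "t \<in> distinct_tuples 1 S"
  then have "t 0 \<in> S" by (auto simp: distinct_tuples_def)
  moreover have "t = restrict (\<lambda>_. t 0) {..<1::nat}"
    using t by (auto simp: distinct_tuples_def PiE_def extensional_def fun_eq_iff)
  ultimately show "\<exists>x\<in>S. t = restrict (\<lambda>_. x) {..<1::nat}" by blast
qed

lemma dt1_integral: "(\<integral>\<^sup>+ t. g (t 0) \<partial>count_space (distinct_tuples 1 S)) = (\<integral>\<^sup>+ x. g x \<partial>count_space S)"
  using nn_integral_bij_count_space[OF dt1_bij[of S], where f="\<lambda>t. g (t 0)"] by simp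

lemma less2: "(i::nat) < 2 \<longleftrightarrow> i = 0 \<or> i = 1" by auto

lemma dt2_bij: "bij_betw (\<lambda>p. restrict (\<lambda>i. if i = 0 then fst p else snd p) {..<2::nat})
   (Sigma S (\<lambda>x. S - {x})) (distinct_tuples 2 S)"
proof (rule bij_betwI')
  fix p q assume "p \<in> Sigma S (\<lambda>x. S - {x})" "q \<in> Sigma S (\<lambda>x. S - {x})"
  show "(restrict (\<lambda>i. if i = 0 then fst p else snd p) {..<2::nat} = restrict (\<lambda>i. if i = 0 then fst q else snd q) {..<2}) = (p = q)"
  proof
    assume e: "restrict (\<lambda>i. if i = 0 then fst p else snd p) {..<2::nat} = restrict (\<lambda>i. if i = 0 then fst q else snd q) {..<2}"
    from fun_cong[OF e, of 0] fun_cong[OF e, of 1] show "p = q" by (simp add: prod_eq_iff)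
  next
    assume "p = q" then show "restrict (\<lambda>i. if i = 0 then fst p else snd p) {..<2::nat} = restrict (\<lambda>i. if i = 0 then fst q else snd q) {..<2}"
      by (rule arg_cong)
  qed
next
  fix p assume p: "p \<in> Sigma S (\<lambda>x. S - {x})"
  have "restrict (\<lambda>i. if i = 0 then fst p else snd p) {..<2::nat} \<in> PiE {..<2} (\<lambda>_. S)"
    using p by (intro restrict_PiE_iff[THEN iffD2]) auto
  moreover have "inj_on (restrict (\<lambda>i. if i = 0 then fst p else snd p) {..<2::nat}) {..<2}"
  proof (rule inj_onI)
    fix i j :: nat assume ij: "i \<in> {..<2}" "j \<in> {..<2}"
      and e: "restrict (\<lambda>i. if i = 0 then fst p else snd p) {..<2::nat} i = restrict (\<lambda>i. if i = 0 then fst p else snd p) {..<2::nat} j"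
    from ij have "i = 0 \<or> i = 1" "j = 0 \<or> j = 1" by (simp_all only: lessThan_iff less2)
    then show "i = j" using e p by auto
  qed
  ultimately show "restrict (\<lambda>i. if i = 0 then fst p else snd p) {..<2::nat} \<in> distinct_tuples 2 S"
    unfolding distinct_tuples_def by blast
next
  fix t assume t: "t \<in> distinct_tuples 2 S"
  then have tP: "t \<in> PiE {..<2} (\<lambda>_. S)" and inj: "inj_on t {..<2}"
    by (auto simp: distinct_tuples_def)
  have "t 0 \<in> S" "t 1 \<in> S" using PiE_mem[OF tP, of 0] PiE_mem[OF tP, of 1] by simp_all
  have "t 0 \<noteq> t 1" using inj_onD[OF inj, of 0 1] by auto
  have teq: "t = restrict (\<lambda>i. if i = 0 then fst (t 0, t 1) else snd (t 0, t 1)) {..<2::nat}"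
  proof
    fix i show "t i = restrict (\<lambda>i. if i = 0 then fst (t 0, t 1) else snd (t 0, t 1)) {..<2::nat} i"
    proof (cases "i < 2")
      case True then have "i = 0 \<or> i = 1" by (simp only: less2)
      then show ?thesis by auto
    next
      case False then show ?thesis using tP by (auto simp: PiE_def extensional_def)
    qed
  qed
  show "\<exists>p\<in>Sigma S (\<lambda>x. S - {x}). t = restrict (\<lambda>i. if i = 0 then fst p else snd p) {..<2::nat}"
  proof (rule bexI[of _ "(t 0, t 1)"])
    show "t = restrict (\<lambda>i. if i = 0 then fst (t 0, t 1) else snd (t 0, t 1)) {..<2::nat}" by (rule teq)
    show "(t 0, t 1) \<in> Sigma S (\<lambda>x. S - {x})" using \<open>t 0 \<in> S\<close> \<open>t 1 \<in> S\<close> \<open>t 0 \<noteq> t 1\<close> by simp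
  qed
qed

lemma kdet1: "kdet K 1 t = K (t 0) (t 0)"
  by (simp add: kdet_def lessThan_Suc)

lemma kdet2: "kdet K 2 t = K (t 0) (t 0) * K (t 1) (t 1) - K (t 0) (t 1) * K (t 1) (t 0)"
proof -
  have e: "{..<2::nat} = insert 0 {1}" by auto
  show ?thesis
    unfolding kdet_def e
    by (subst sum_over_permutations_insert) (auto simp: sign_swap_id sign_id transpose_def)
qed

lemma dt2_integral:
  assumes S: "countable S"
  shows "(\<integral>\<^sup>+ t. g (t 0) (t 1) \<partial>count_space (distinct_tuples 2 S))
       = (\<integral>\<^sup>+ x. \<integral>\<^sup>+ y. g x y \<partial>count_space (S - {x}) \<partial>count_space S)"
proof -
  have "(\<integral>\<^sup>+ t. g (t 0) (t 1) \<partial>count_space (distinct_tuples 2 S))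
      = (\<integral>\<^sup>+ p. g (fst p) (snd p) \<partial>count_space (Sigma S (\<lambda>x. S - {x})))"
    using nn_integral_bij_count_space[OF dt2_bij[of S], where f="\<lambda>t. g (t 0) (t 1)"] by simp
  also have "\<dots> = (\<integral>\<^sup>+ p. g (fst p) (snd p) * indicator (Sigma S (\<lambda>x. S - {x})) p \<partial>count_space (S \<times> S))"
    by (subst (1 2) nn_integral_count_space_indicator) (auto intro!: nn_integral_cong simp: indicator_def)
  also have "\<dots> = (\<integral>\<^sup>+ p. g (fst p) (snd p) * indicator (Sigma S (\<lambda>x. S - {x})) p \<partial>(count_space S \<Otimes>\<^sub>M count_space S))"
    by (simp add: pair_measure_countable S)
  also have "\<dots> = (\<integral>\<^sup>+ x. \<integral>\<^sup>+ y. g x y * indicator (Sigma S (\<lambda>x. S - {x})) (x, y) \<partial>count_space S \<partial>count_space S)"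
  proof -
    interpret sigma_finite_measure "count_space S"
      by (rule sigma_finite_measure_count_space_countable[OF S])
    show ?thesis
      by (subst nn_integral_fst[symmetric]) (auto simp: pair_measure_countable S)
  qed
  also have "\<dots> = (\<integral>\<^sup>+ x. \<integral>\<^sup>+ y. g x y \<partial>count_space (S - {x}) \<partial>count_space S)"
  proof (rule nn_integral_cong)
    fix x assume x: "x \<in> space (count_space S)"
    show "(\<integral>\<^sup>+ y. g x y * indicator (Sigma S (\<lambda>x. S - {x})) (x, y) \<partial>count_space S) = (\<integral>\<^sup>+ y. g x y \<partial>count_space (S - {x}))"
      using x by (subst (1 2) nn_integral_count_space_indicator) (auto intro!: nn_integral_cong simp: indicator_def)
  qed
  finally show ?thesis .
qed

lemma PiM1_integral:
  fixes f :: "'a::euclidean_space \<Rightarrow> ennreal"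
  assumes f: "f \<in> borel_measurable lborel"
  shows "(\<integral>\<^sup>+ t. f (t 0) \<partial>PiM {..<1::nat} (\<lambda>_. lborel)) = (\<integral>\<^sup>+ x. f x \<partial>lborel)"
proof -
  interpret product_sigma_finite "\<lambda>_::nat. lborel::'a measure" by standard
  have e: "{..<1::nat} = {0}" by auto
  show ?thesis unfolding e by (rule product_nn_integral_singleton[OF f])
qed

lemma PiM2_integral:
  fixes f :: "'a::euclidean_space \<times> 'a \<Rightarrow> ennreal"
  assumes f: "f \<in> borel_measurable (lborel \<Otimes>\<^sub>M lborel)"
  shows "(\<integral>\<^sup>+ t. f (t 0, t 1) \<partial>PiM {..<2::nat} (\<lambda>_. lborel)) = (\<integral>\<^sup>+ x. \<integral>\<^sup>+ y. f (x, y) \<partial>lborel \<partial>lborel)"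
proof -
  interpret product_sigma_finite "\<lambda>_::nat. lborel::'a measure" by standard
  have e: "{..<2::nat} = insert 1 {0}" by auto
  have fm: "(\<lambda>t. f (t 0, t 1)) \<in> borel_measurable (PiM (insert 1 {0::nat}) (\<lambda>_. lborel))"
    by (rule measurable_compose[OF _ f]) (intro measurable_Pair measurable_component_singleton; simp)
  have G: "(\<lambda>a. \<integral>\<^sup>+ y. f (a, y) \<partial>lborel) \<in> borel_measurable lborel"
    by (rule lborel.borel_measurable_nn_integral_fst[OF f])
  have "(\<integral>\<^sup>+ t. f (t 0, t 1) \<partial>PiM {..<2::nat} (\<lambda>_. lborel))
      = (\<integral>\<^sup>+ x. (\<lambda>a. \<integral>\<^sup>+ y. f (a, y) \<partial>lborel) (x 0) \<partial>PiM {0::nat} (\<lambda>_. lborel))"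
    unfolding e by (subst product_nn_integral_insert[OF _ _ fm]) auto
  also have "\<dots> = (\<integral>\<^sup>+ x. \<integral>\<^sup>+ y. f (x, y) \<partial>lborel \<partial>lborel)"
    by (rule product_nn_integral_singleton[OF G])
  finally show ?thesis .
qed

lemma lborel_translate:
  fixes g :: "'a::euclidean_space \<Rightarrow> ennreal"
  assumes g: "g \<in> borel_measurable borel"
  shows "(\<integral>\<^sup>+ y. g (y - x) \<partial>lborel) = (\<integral>\<^sup>+ z. g z \<partial>lborel)"
proof -
  have *: "(\<integral>\<^sup>+ z. h z \<partial>lborel) = (\<integral>\<^sup>+ y. h (x + y) \<partial>lborel)"
    if h: "h \<in> borel_measurable borel" for h :: "'a \<Rightarrow> ennreal"
  proof -
    have "(\<integral>\<^sup>+ z. h z \<partial>lborel) = (\<integral>\<^sup>+ z. h z \<partial>distr lborel borel ((+) x))"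
      by (simp add: lborel_distr_plus)
    also have "\<dots> = (\<integral>\<^sup>+ y. h (x + y) \<partial>lborel)"
      using h by (subst nn_integral_distr) auto
    finally show ?thesis .
  qed
  have "(\<lambda>z. g (z - x)) \<in> borel_measurable borel" using g by measurable
  from *[OF this] show ?thesis by simp
qed

lemma pcount_count_integral: "(\<integral>\<^sup>+ x. indicator B x \<partial>count_space S) = pcount S B"
proof -
  have "(\<integral>\<^sup>+ x. indicator B x \<partial>count_space S) = (\<integral>\<^sup>+ x. indicator (S \<inter> B) x \<partial>count_space S)"
    by (rule nn_integral_cong) (auto simp: indicator_def)
  also have "\<dots> = emeasure (count_space S) (S \<inter> B)"
    by (rule nn_integral_indicator) auto
  also have "\<dots> = pcount S B"
    by (simp add: pcount_def emeasure_count_space)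
  finally show ?thesis .
qed

lemma kdet1': "kdet K (Suc 0) t = K (t 0) (t 0)"
  using kdet1[of K t] by simp

lemma first_moment:
  fixes K :: "'a::euclidean_space \<Rightarrow> real"
  assumes Phi: "dpp P (\<lambda>x y. K (x - y))" and B: "B \<in> sets borel"
  shows "(\<integral>\<^sup>+ S. pcount S B \<partial>P) = ennreal (K 0) * emeasure lborel B"
proof -
  have fm: "(\<lambda>t. indicator B (t 0) :: ennreal) \<in> borel_measurable (PiM {..<1::nat} (\<lambda>_. lborel))"
    by (rule measurable_compose[of _ _ lborel]) (auto intro!: measurable_component_singleton borel_measurable_indicator simp: B)
  have dk: "\<And>k f. k \<ge> 1 \<Longrightarrow> f \<in> borel_measurable (PiM {..<k} (\<lambda>_. lborel)) \<Longrightarrow>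
      (\<integral>\<^sup>+ S. (\<integral>\<^sup>+ x. f x \<partial>count_space (distinct_tuples k S)) \<partial>P)
           = (\<integral>\<^sup>+ x. f x * ennreal (kdet (\<lambda>x y. K (x - y)) k x) \<partial>PiM {..<k} (\<lambda>_. lborel))"
    using Phi unfolding dpp_def by blast
  have "(\<integral>\<^sup>+ S. pcount S B \<partial>P) = (\<integral>\<^sup>+ S. (\<integral>\<^sup>+ t. indicator B (t 0) \<partial>count_space (distinct_tuples 1 S)) \<partial>P)"
    by (simp only: dt1_integral pcount_count_integral)
  also have "\<dots> = (\<integral>\<^sup>+ t. indicator B (t 0) * ennreal (kdet (\<lambda>x y. K (x - y)) 1 t) \<partial>PiM {..<1::nat} (\<lambda>_. lborel))"
    by (rule dk[OF _ fm]) simp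
  also have "\<dots> = (\<integral>\<^sup>+ t. (\<lambda>x. indicator B x * ennreal (K 0)) (t 0) \<partial>PiM {..<1::nat} (\<lambda>_. lborel))"
    by (simp only: kdet1 diff_self)
  also have "\<dots> = (\<integral>\<^sup>+ x. indicator B x * ennreal (K 0) \<partial>lborel)"
    by (rule PiM1_integral) (intro borel_measurable_times_ennreal borel_measurable_indicator borel_measurable_const, simp add: B)
  also have "\<dots> = (\<integral>\<^sup>+ x. indicator B x \<partial>lborel) * ennreal (K 0)"
    by (rule nn_integral_multc) (rule borel_measurable_indicator, simp add: B)
  also have "\<dots> = emeasure lborel B * ennreal (K 0)"
    using B by simp
  finally show ?thesis by (simp only: mult.commute)
qed

lemma K_meas:
  fixes K :: "'a::euclidean_space \<Rightarrow> real"
  assumes "continuous_on UNIV K"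
  shows "K \<in> borel_measurable borel"
  using assms by (rule borel_measurable_continuous_onI)

lemma kdet2_K:
  fixes K :: "'a::euclidean_space \<Rightarrow> real"
  assumes K_sym: "\<forall>x. K (- x) = K x"
  shows "kdet (\<lambda>x y. K (x - y)) 2 t = (K 0)\<^sup>2 - (K (t 1 - t 0))\<^sup>2"
proof -
  have "K (t 0 - t 1) = K (t 1 - t 0)" using K_sym[rule_format, of "t 1 - t 0"] by simp
  then show ?thesis unfolding kdet2 power2_eq_square by simp
qed

lemma K_bound_AE:
  fixes K :: "'a::euclidean_space \<Rightarrow> real"
  assumes Phi: "dpp P (\<lambda>x y. K (x - y))" and K_sym: "\<forall>x. K (- x) = K x"
    and Km: "K \<in> borel_measurable borel"
  shows "AE z in lborel. (K z)\<^sup>2 \<le> (K 0)\<^sup>2"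
proof -
  define N where "N = {z. (K 0)\<^sup>2 < (K z)\<^sup>2}"
  have Nm: "N \<in> sets borel" unfolding N_def using Km by measurable
  have AE2: "AE t in PiM {..<2::nat} (\<lambda>_. lborel). kdet (\<lambda>x y. K (x - y)) 2 t \<ge> 0"
    using Phi unfolding dpp_def by auto
  have fm: "(\<lambda>p. indicator N (snd p - fst p) :: ennreal) \<in> borel_measurable (lborel \<Otimes>\<^sub>M lborel)"
    using Nm by measurable
  have fm2: "(\<lambda>t. (\<lambda>p. indicator N (snd p - fst p) :: ennreal) (t 0, t 1)) \<in> borel_measurable (PiM {..<2::nat} (\<lambda>_. lborel))"
    by (rule measurable_compose[OF _ fm]) (intro measurable_Pair measurable_component_singleton; simp)
  have "(\<integral>\<^sup>+ t. (\<lambda>p. indicator N (snd p - fst p) :: ennreal) (t 0, t 1) \<partial>PiM {..<2::nat} (\<lambda>_. lborel)) = 0"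
    using fm2
  proof (subst nn_integral_0_iff_AE)
    show "AE t in PiM {..<2::nat} (\<lambda>_. lborel). (\<lambda>p. indicator N (snd p - fst p) :: ennreal) (t 0, t 1) = 0"
      using AE2 by eventually_elim (auto simp: kdet2_K[OF K_sym] N_def indicator_def)
  qed
  then have "(\<integral>\<^sup>+ x. \<integral>\<^sup>+ y. indicator N (y - x) \<partial>lborel \<partial>lborel) = (0::ennreal)"
    by (subst (asm) PiM2_integral[OF fm]) simp
  also have "(\<integral>\<^sup>+ x. \<integral>\<^sup>+ y. indicator N (y - x) \<partial>lborel \<partial>lborel) = (\<integral>\<^sup>+ x. emeasure lborel N \<partial>lborel)"
    using Nm by (subst lborel_translate) auto
  finally have "emeasure lborel N = 0"
    by (simp add: nn_integral_const ennreal_mult_eq_top_iff)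
  then have "N \<in> null_sets lborel" using Nm by (auto simp: null_sets_def)
  then show ?thesis by (rule AE_I') (auto simp: N_def not_le)
qed

lemma translate_count:
  fixes S :: "'a::euclidean_space set"
  shows "pcount ((\<lambda>y. y - x) ` (S - {x})) B = (\<integral>\<^sup>+ y. indicator B (y - x) \<partial>count_space (S - {x}))"
proof -
  have bij: "bij_betw (\<lambda>y. y - x) (S - {x}) ((\<lambda>y. y - x) ` (S - {x}))"
    by (rule inj_on_imp_bij_betw) (auto simp: inj_on_def)
  show ?thesis
    using nn_integral_bij_count_space[OF bij, where f="indicator B"]
    by (simp add: pcount_count_integral)
qed

lemma palm_moment:
  fixes K :: "'a::euclidean_space \<Rightarrow> real"
  assumes Phi: "dpp P (\<lambda>x y. K (x - y))" and Palm: "reduced_palm P Q"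
    and K_sym: "\<forall>x. K (- x) = K x" and Km: "K \<in> borel_measurable borel"
    and B: "B \<in> sets borel"
  shows "ennreal (K 0) * (\<integral>\<^sup>+ S. pcount S B \<partial>Q) = (\<integral>\<^sup>+ z. indicator B z * ennreal ((K 0)\<^sup>2 - (K z)\<^sup>2) \<partial>lborel)"
proof -
  define A :: "'a set" where "A = cbox 0 One"
  have Am: "A \<in> sets borel" "bounded A" by (auto simp: A_def)
  have A1: "emeasure lborel A = 1"
    by (simp add: A_def emeasure_lborel_cbox_eq)
  define C where "C = (\<integral>\<^sup>+ z. indicator B z * ennreal ((K 0)\<^sup>2 - (K z)\<^sup>2) \<partial>lborel)"
  define g where "g = (\<lambda>x y::'a. indicator A x * indicator B (y - x) :: ennreal)"
  define F where "F = (\<lambda>p::'a\<times>'a. indicator A (fst p) * indicator B (snd p - fst p) * ennreal ((K 0)\<^sup>2 - (K (snd p - fst p))\<^sup>2))"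
  have hm: "(\<lambda>S. pcount S B) \<in> borel_measurable configs" by (rule pcount_meas[OF B])
  have sP: "sets P = sets configs" using Phi[unfolded dpp_def] by (elim conjE)
  have spP: "space P = space configs" by (rule sets_eq_imp_space_eq[OF sP])
  have palm_eq:
    "(\<integral>\<^sup>+ S. (\<integral>\<^sup>+ x. indicator A x * pcount ((\<lambda>y. y - x) ` (S - {x})) B \<partial>count_space S) \<partial>P)
     = (\<integral>\<^sup>+ S. pcount S A \<partial>P) * (\<integral>\<^sup>+ S. pcount S B \<partial>Q)"
    by (rule Palm[unfolded reduced_palm_def, THEN conjunct2, THEN conjunct2, rule_format, OF hm Am(1) Am(2)])
  have A_eq: "(\<integral>\<^sup>+ S. pcount S A \<partial>P) = ennreal (K 0)"
    using first_moment[OF Phi Am(1)] A1 by simp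
  have "(\<integral>\<^sup>+ S. (\<integral>\<^sup>+ x. indicator A x * pcount ((\<lambda>y. y - x) ` (S - {x})) B \<partial>count_space S) \<partial>P)
      = (\<integral>\<^sup>+ S. (\<integral>\<^sup>+ t. g (t 0) (t 1) \<partial>count_space (distinct_tuples 2 S)) \<partial>P)"
  proof (rule nn_integral_cong)
    fix S assume "S \<in> space P"
    then have cS: "countable S" by (auto simp: spP space_configs intro: lf_countable)
    show "(\<integral>\<^sup>+ x. indicator A x * pcount ((\<lambda>y. y - x) ` (S - {x})) B \<partial>count_space S)
        = (\<integral>\<^sup>+ t. g (t 0) (t 1) \<partial>count_space (distinct_tuples 2 S))"
    proof -
      have "(\<integral>\<^sup>+ t. g (t 0) (t 1) \<partial>count_space (distinct_tuples 2 S))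
          = (\<integral>\<^sup>+ x. \<integral>\<^sup>+ y. g x y \<partial>count_space (S - {x}) \<partial>count_space S)"
        by (rule dt2_integral[OF cS])
      also have "\<dots> = (\<integral>\<^sup>+ x. indicator A x * pcount ((\<lambda>y. y - x) ` (S - {x})) B \<partial>count_space S)"
        unfolding g_def translate_count
        by (rule nn_integral_cong) (rule nn_integral_cmult, simp)
      finally show ?thesis by (rule sym)
    qed
  qed
  also have "\<dots> = (\<integral>\<^sup>+ t. g (t 0) (t 1) * ennreal (kdet (\<lambda>x y. K (x - y)) 2 t) \<partial>PiM {..<2::nat} (\<lambda>_. lborel))"
  proof -
    have gm: "(\<lambda>p. g (fst p) (snd p)) \<in> borel_measurable (lborel \<Otimes>\<^sub>M lborel)"
      unfolding g_def using Am B by measurable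
    have "(\<lambda>t. (\<lambda>p. g (fst p) (snd p)) (t 0, t 1)) \<in> borel_measurable (PiM {..<2::nat} (\<lambda>_. lborel))"
      by (rule measurable_compose[OF _ gm]) (intro measurable_Pair measurable_component_singleton; simp)
    with Phi show ?thesis unfolding dpp_def by simp
  qed
  also have "\<dots> = (\<integral>\<^sup>+ t. F (t 0, t 1) \<partial>PiM {..<2::nat} (\<lambda>_. lborel))"
    by (simp add: kdet2_K[OF K_sym] g_def F_def)
  also have "\<dots> = (\<integral>\<^sup>+ x. \<integral>\<^sup>+ y. F (x, y) \<partial>lborel \<partial>lborel)"
    by (rule PiM2_integral) (unfold F_def, use Am B Km in measurable)
  also have "\<dots> = (\<integral>\<^sup>+ x. indicator A x * C \<partial>lborel)"
  proof (rule nn_integral_cong)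
    fix x :: 'a
    have "(\<integral>\<^sup>+ y. F (x, y) \<partial>lborel) = indicator A x * (\<integral>\<^sup>+ y. (\<lambda>z. indicator B z * ennreal ((K 0)\<^sup>2 - (K z)\<^sup>2)) (y - x) \<partial>lborel)"
      unfolding F_def by (subst nn_integral_cmult[symmetric]) (use B Km in \<open>auto simp: mult.assoc\<close>)
    also have "\<dots> = indicator A x * C"
      unfolding C_def by (subst lborel_translate) (use B Km in auto)
    finally show "(\<integral>\<^sup>+ y. F (x, y) \<partial>lborel) = indicator A x * C" .
  qed
  also have "\<dots> = (\<integral>\<^sup>+ x. indicator A x \<partial>lborel) * C"
    by (rule nn_integral_multc) (rule borel_measurable_indicator, simp add: Am)
  also have "\<dots> = C"
    using Am A1 by simp
  finally have fin: "(\<integral>\<^sup>+ S. (\<integral>\<^sup>+ x. indicator A x * pcount ((\<lambda>y. y - x) ` (S - {x})) B \<partial>count_space S) \<partial>P) = C" .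
  show ?thesis unfolding C_def[symmetric] fin[symmetric] palm_eq A_eq ..
qed

lemma distr_emeasure_cases:
  "emeasure (distr M N f) X = 0 \<or> emeasure (distr M N f) X = emeasure M (f -` X \<inter> space M)"
  unfolding distr_def emeasure_measure_of_conv by auto

lemma union_meas:
  fixes J :: "('a::euclidean_space set \<times> 'a set) measure"
  assumes J_sets: "sets J = sets (configs \<Otimes>\<^sub>M configs)"
    and J_union: "distr J configs (\<lambda>p. fst p \<union> snd p) = P"
    and Pp: "prob_space P"
  shows "(\<lambda>p. fst p \<union> snd p) \<in> measurable J configs"
proof (rule measurableI)
  have spJ: "space J = space configs \<times> space configs"
    using sets_eq_imp_space_eq[OF J_sets] by (simp add: space_pair_measure)
  show "x \<in> space J \<Longrightarrow> fst x \<union> snd x \<in> space configs" for x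
    by (auto simp: spJ space_configs intro: lf_Un)
  fix A :: "'a set set" assume A: "A \<in> sets configs"
  define u where "u = (\<lambda>p::'a set \<times> 'a set. fst p \<union> snd p)"
  have uJ: "\<And>x. x \<in> space J \<Longrightarrow> u x \<in> space configs"
    by (auto simp: u_def spJ space_configs intro: lf_Un)
  show "(\<lambda>p. fst p \<union> snd p) -` A \<inter> space J \<in> sets J"
  proof (rule ccontr)
    assume nA: "(\<lambda>p. fst p \<union> snd p) -` A \<inter> space J \<notin> sets J"
    define C where "C = space configs - A"
    have C: "C \<in> sets configs" using A by (auto simp: C_def)
    have eq: "u -` C \<inter> space J = space J - (u -` A \<inter> space J)"
      using uJ by (auto simp: C_def)
    have nC: "u -` C \<inter> space J \<notin> sets J"
    proof
      assume "u -` C \<inter> space J \<in> sets J"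
      then have "space J - (u -` C \<inter> space J) \<in> sets J" by auto
      also have "space J - (u -` C \<inter> space J) = u -` A \<inter> space J" using eq by auto
      finally show False using nA by (simp add: u_def)
    qed
    have sP: "sets P = sets configs" using J_union by auto
    have spP: "space P = space configs" using J_union by auto
    have "emeasure P A = 0"
      using distr_emeasure_cases[of J configs u A] nA emeasure_notin_sets[OF nA]
      by (auto simp: J_union[folded u_def, symmetric] u_def)
    moreover have "emeasure P C = 0"
      using distr_emeasure_cases[of J configs u C] emeasure_notin_sets[OF nC]
      by (auto simp: J_union[folded u_def, symmetric])
    moreover have "emeasure P A + emeasure P C = emeasure P (space P)"
    proof -
      have Asub: "A \<subseteq> space configs" using A by (rule sets.sets_into_space)
      have "emeasure P A + emeasure P C = emeasure P (A \<union> C)"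
        using A C by (intro plus_emeasure) (auto simp: sP C_def)
      also have "A \<union> C = space P" using Asub by (auto simp: C_def spP)
      finally show ?thesis .
    qed
    ultimately show False using prob_space.emeasure_space_1[OF Pp] by simp
  qed
qed

lemma pcount_mono: "X \<subseteq> Y \<Longrightarrow> pcount S X \<le> pcount S Y"
  unfolding pcount_emeasure by (rule emeasure_mono) auto

theorem lemma3p1:
  fixes K :: "'a::euclidean_space \<Rightarrow> real"
    and P Q :: "'a set measure"
    and J :: "('a set \<times> 'a set) measure"
    and M :: "'m measure" and X :: "'m \<Rightarrow> 'a"
    and B :: "'a set"
  assumes K_cont: "continuous_on UNIV K"
    and K_L2: "integrable lborel (\<lambda>x. (K x)\<^sup>2)"
    and K_sym: "\<forall>x. K (- x) = K x"
    and K_pos: "K 0 > 0"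
    and K_fourier: "\<exists>g. L2_fourier K g \<and> (\<forall>\<xi>. 0 \<le> g \<xi> \<and> g \<xi> < 1)"
    and Phi: "dpp P (\<lambda>x y. K (x - y))"
    and Palm: "reduced_palm P Q"
    and J_prob: "prob_space J"
    and J_sets: "sets J = sets (configs \<Otimes>\<^sub>M configs)"
    and J_fst: "distr J configs fst = Q"
    and J_disj: "AE p in J. fst p \<inter> snd p = {}"
    and J_union: "distr J configs (\<lambda>p. fst p \<union> snd p) = P"
    and M_prob: "prob_space M"
    and X_distr: "distributed M lborel X (\<lambda>x. ennreal ((K x)\<^sup>2 / (\<integral>y. (K y)\<^sup>2 \<partial>lborel)))"
    and B_borel: "B \<in> sets borel"
  shows "emeasure M (X -` B \<inter> space M)
           = (\<integral>\<^sup>+ p. pcount (snd p) B \<partial>J) / (\<integral>\<^sup>+ p. pcount (snd p) UNIV \<partial>J)"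
proof -
  have Km: "K \<in> borel_measurable borel" by (rule K_meas[OF K_cont])
  have AEb: "AE z in lborel. (K z)\<^sup>2 \<le> (K 0)\<^sup>2" by (rule K_bound_AE[OF Phi K_sym Km])
  have Pp: "prob_space P" using Phi[unfolded dpp_def] by (elim conjE)
  have um: "(\<lambda>p. fst p \<union> snd p) \<in> measurable J configs" by (rule union_meas[OF J_sets J_union Pp])
  have mJ: "measurable J configs = measurable (configs \<Otimes>\<^sub>M configs) configs"
    by (rule measurable_cong_sets[OF J_sets refl])
  have fstm: "fst \<in> measurable J configs" unfolding mJ by (rule measurable_fst)
  have sndm: "snd \<in> measurable J configs" unfolding mJ by (rule measurable_snd)
  define Eeta where "Eeta = (\<lambda>B. \<integral>\<^sup>+ p. pcount (snd p) B \<partial>J)"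
  define I where "I = (\<lambda>B. \<integral>\<^sup>+ z. ennreal ((K z)\<^sup>2) * indicator B z \<partial>lborel)"
  have Km2: "(\<lambda>z. ennreal ((K z)\<^sup>2)) \<in> borel_measurable lborel" using Km by measurable
  have split: "(\<integral>\<^sup>+ S. pcount S B \<partial>P) = (\<integral>\<^sup>+ S. pcount S B \<partial>Q) + Eeta B"
    if B: "B \<in> sets borel" for B
  proof -
    have "(\<integral>\<^sup>+ S. pcount S B \<partial>P) = (\<integral>\<^sup>+ S. pcount S B \<partial>distr J configs (\<lambda>p. fst p \<union> snd p))"
      by (simp only: J_union)
    also have "\<dots> = (\<integral>\<^sup>+ p. pcount (fst p \<union> snd p) B \<partial>J)"
      by (rule nn_integral_distr[OF um]) (simp add: pcount_meas[OF B])
    also have "\<dots> = (\<integral>\<^sup>+ p. pcount (fst p) B + pcount (snd p) B \<partial>J)"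
      by (rule nn_integral_cong_AE) (use J_disj in \<open>eventually_elim, simp add: pcount_Un_disj\<close>)
    also have "\<dots> = (\<integral>\<^sup>+ p. pcount (fst p) B \<partial>J) + Eeta B"
      unfolding Eeta_def
      by (rule nn_integral_add; rule measurable_compose[OF _ pcount_meas[OF B]]) (rule fstm, rule sndm)
    also have "(\<integral>\<^sup>+ p. pcount (fst p) B \<partial>J) = (\<integral>\<^sup>+ S. pcount S B \<partial>Q)"
      unfolding J_fst[symmetric] by (rule nn_integral_distr[OF fstm, symmetric]) (simp add: pcount_meas[OF B])
    finally show ?thesis .
  qed
  have bdd: "ennreal (K 0) * Eeta B = I B" if B: "B \<in> sets borel" "bounded B" for B
  proof -
    have lamB: "emeasure lborel B < \<infinity>" by (rule emeasure_bounded_finite[OF B(2)])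
    define D where "D = (\<integral>\<^sup>+ z. indicator B z * ennreal ((K 0)\<^sup>2 - (K z)\<^sup>2) \<partial>lborel)"
    have EP: "(\<integral>\<^sup>+ S. pcount S B \<partial>P) = ennreal (K 0) * emeasure lborel B"
      by (rule first_moment[OF Phi B(1)])
    have EQ: "ennreal (K 0) * (\<integral>\<^sup>+ S. pcount S B \<partial>Q) = D"
      using palm_moment[OF Phi Palm K_sym Km B(1)] by (simp only: D_def)
    have DI: "D + I B = ennreal ((K 0)\<^sup>2) * emeasure lborel B"
    proof -
      have m1: "(\<lambda>z. indicator B z * ennreal ((K 0)\<^sup>2 - (K z)\<^sup>2)) \<in> borel_measurable lborel"
        using B Km by measurable
      have m2: "(\<lambda>z. ennreal ((K z)\<^sup>2) * indicator B z) \<in> borel_measurable lborel"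
        using B Km by measurable
      have "D + I B = (\<integral>\<^sup>+ z. indicator B z * ennreal ((K 0)\<^sup>2 - (K z)\<^sup>2) + ennreal ((K z)\<^sup>2) * indicator B z \<partial>lborel)"
        unfolding D_def I_def by (rule nn_integral_add[OF m1 m2, symmetric])
      also have "\<dots> = (\<integral>\<^sup>+ z. ennreal ((K 0)\<^sup>2) * indicator B z \<partial>lborel)"
      proof (rule nn_integral_cong_AE)
        show "AE z in lborel. indicator B z * ennreal ((K 0)\<^sup>2 - (K z)\<^sup>2) + ennreal ((K z)\<^sup>2) * indicator B z
            = ennreal ((K 0)\<^sup>2) * indicator B z"
          using AEb
        proof eventually_elim
          case (elim z)
          have "ennreal ((K 0)\<^sup>2 - (K z)\<^sup>2) + ennreal ((K z)\<^sup>2) = ennreal ((K 0)\<^sup>2)"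
            using elim by (subst ennreal_plus[symmetric]) auto
          then show ?case by (auto simp: indicator_def)
        qed
      qed
      also have "\<dots> = ennreal ((K 0)\<^sup>2) * emeasure lborel B"
        using B by (subst nn_integral_cmult) auto
      finally show ?thesis .
    qed
    have e1: "ennreal (K 0) * (\<integral>\<^sup>+ S. pcount S B \<partial>P) = D + ennreal (K 0) * Eeta B"
      unfolding split[OF B(1)] distrib_left EQ ..
    have e2: "ennreal (K 0) * (\<integral>\<^sup>+ S. pcount S B \<partial>P) = D + I B"
      unfolding EP DI mult.assoc[symmetric] using K_pos by (simp add: ennreal_mult[symmetric] power2_eq_square)
    have eq: "D + ennreal (K 0) * Eeta B = D + I B" by (rule trans[OF e1[symmetric] e2])
    have "D \<le> D + I B" by simp
    also have "\<dots> < \<infinity>" unfolding DI using lamB by (simp add: ennreal_mult_less_top)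
    finally have "D \<noteq> \<infinity>" by simp
    then show ?thesis using eq ennreal_add_left_cancel[of D "ennreal (K 0) * Eeta B" "I B"] by blast
  qed
  have gen: "ennreal (K 0) * Eeta B = I B" if B: "B \<in> sets borel" for B
  proof -
    have Bn: "B \<inter> ball 0 (real n) \<in> sets borel" "bounded (B \<inter> ball 0 (real n))" for n
      using B by auto
    have "Eeta B = (\<integral>\<^sup>+ p. (SUP n. pcount (snd p) (B \<inter> ball 0 (real n))) \<partial>J)"
      unfolding Eeta_def by (subst pcount_SUP) rule
    also have "\<dots> = (SUP n. Eeta (B \<inter> ball 0 (real n)))"
      unfolding Eeta_def
    proof (rule nn_integral_monotone_convergence_SUP)
      show "incseq (\<lambda>n p. pcount (snd p) (B \<inter> ball 0 (real n)))"
        by (rule incseq_SucI) (auto simp: le_fun_def intro!: pcount_mono)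
      show "(\<lambda>p. pcount (snd p) (B \<inter> ball 0 (real n))) \<in> borel_measurable J" for n
        by (rule measurable_compose[OF sndm pcount_meas[OF Bn(1)]])
    qed
    finally have E1: "ennreal (K 0) * Eeta B = (SUP n. I (B \<inter> ball 0 (real n)))"
      by (simp add: SUP_mult_left_ennreal bdd[OF Bn])
    have Id: "I Y = emeasure (density lborel (\<lambda>z. ennreal ((K z)\<^sup>2))) Y" if "Y \<in> sets borel" for Y
      unfolding I_def using that by (subst emeasure_density[OF Km2]) auto
    have "(SUP n. I (B \<inter> ball 0 (real n))) = (SUP n. emeasure (density lborel (\<lambda>z. ennreal ((K z)\<^sup>2))) (B \<inter> ball 0 (real n)))"
      using Id[OF Bn(1)] by simp
    also have "\<dots> = emeasure (density lborel (\<lambda>z. ennreal ((K z)\<^sup>2))) (\<Union>n. B \<inter> ball 0 (real n))"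
      by (rule SUP_emeasure_incseq) (use Bn in \<open>auto simp: incseq_def\<close>)
    also have "(\<Union>n. B \<inter> ball 0 (real n)) = B"
      by (auto intro: reals_Archimedean2)
    also have "emeasure (density lborel (\<lambda>z. ennreal ((K z)\<^sup>2))) B = I B"
      by (rule Id[OF B, symmetric])
    finally show ?thesis using E1 by simp
  qed
  define c where "c = (\<integral>y. (K y)\<^sup>2 \<partial>lborel)"
  have IU: "I UNIV = ennreal c"
    unfolding I_def c_def using K_L2 by (simp add: nn_integral_eq_integral)
  have c_nonneg: "0 \<le> c" unfolding c_def by simp
  have Xem: "emeasure M (X -` Y \<inter> space M) = (\<integral>\<^sup>+ z. ennreal ((K z)\<^sup>2 / c) * indicator Y z \<partial>lborel)"
    if "Y \<in> sets borel" for Y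
    using distributed_emeasure[OF X_distr, of Y] that by (simp add: c_def)
  have c_pos: "0 < c"
  proof (rule ccontr)
    assume "\<not> 0 < c"
    then have "c = 0" using c_nonneg by simp
    then have "emeasure M (X -` UNIV \<inter> space M) = 0" using Xem[of UNIV] by simp
    moreover have "X -` UNIV \<inter> space M = space M" by simp
    ultimately show False using prob_space.emeasure_space_1[OF M_prob] by simp
  qed
  have IB_le: "I B \<le> I UNIV"
    unfolding I_def by (intro nn_integral_mono) (auto simp: indicator_def)
  then have "I B \<le> ennreal c" using IU by simp
  then have "I B < \<infinity>" using ennreal_less_top[of c] by (metis le_less_trans infinity_ennreal_def)
  then obtain r where r: "0 \<le> r" "I B = ennreal r"
    by (cases "I B" rule: ennreal_cases) auto
  have K0: "ennreal (K 0) \<noteq> 0" "ennreal (K 0) \<noteq> \<infinity>" using K_pos by auto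
  have Eeq: "Eeta Y = ennreal (s / K 0)" if "ennreal (K 0) * Eeta Y = ennreal s" "0 \<le> s" for Y s
  proof -
    have "Eeta Y = Eeta Y * ennreal (K 0) / ennreal (K 0)"
      using K0 by (simp add: ennreal_mult_divide_eq)
    also have "\<dots> = ennreal s / ennreal (K 0)" using that(1) by (simp add: mult.commute)
    also have "\<dots> = ennreal (s / K 0)" using that(2) K_pos by (simp add: divide_ennreal)
    finally show ?thesis .
  qed
  have EB: "Eeta B = ennreal (r / K 0)" by (rule Eeq) (use gen[OF B_borel] r in auto)
  have EU: "Eeta UNIV = ennreal (c / K 0)" by (rule Eeq) (use gen[of UNIV] IU c_nonneg in auto)
  have RHS: "Eeta B / Eeta UNIV = ennreal (r / c)"
    unfolding EB EU using r c_pos K_pos by (simp add: divide_ennreal)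
  have "emeasure M (X -` B \<inter> space M) = (\<integral>\<^sup>+ z. ennreal ((K z)\<^sup>2 / c) * indicator B z \<partial>lborel)"
    by (rule Xem[OF B_borel])
  also have "\<dots> = (\<integral>\<^sup>+ z. (ennreal ((K z)\<^sup>2) * indicator B z) * ennreal (1 / c) \<partial>lborel)"
    by (rule nn_integral_cong) (use c_pos in \<open>auto simp: indicator_def ennreal_mult[symmetric]\<close>)
  also have "\<dots> = I B * ennreal (1 / c)"
    unfolding I_def by (rule nn_integral_multc) (use B_borel Km in measurable)
  also have "\<dots> = ennreal (r / c)"
    using r c_pos by (simp add: ennreal_mult[symmetric])
  finally show ?thesis using RHS by (simp add: Eeta_def)
qed

end
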